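(* Let $s\in\{1,2\}$. Let real sequences $\zeta(t)$ and $\phi_i(t)$ ($i\in\mathscr C_s$) satisfy, for every $t$ and every $k\in\mathscr C_s$, the update inclusions $$\zeta(t+1)-\zeta(t)\in\frac{\tau^2\eta}{2n}\sum_{i\in\mathscr C_s}\left[\zeta(t)+\phi_i(t)\right]^2+\left[-\tfrac32\eta\tau\kappa\mathcal L,\ \tfrac32\eta\tau\kappa\mathcal L\right],$$ $$\phi_k(t+1)-\phi_k(t)\in\eta\left[\frac{\kappa^2d}{4n}(|\phi_k(t)|+|\zeta(t)|)^2-\frac52\kappa\tau\mathcal L,\ \frac{3\kappa^2d}{4n}(|\phi_k(t)|+|\zeta(t)|)^2+\frac52\kappa\tau\mathcal L\right].$$ Suppose there exist constants $c^{(t)}\in\left(0,\frac{8}{1+8\mathfrak c}\right)$ and $8\le C^{(\phi)}\le n$, and $t_0\le c^{(t)}\left(\tau^2\eta|\zeta(0)|\right)^{-1}$, such that: 1. $\sqrt{\frac{32\mathcal Ln}{\mathfrak c^2\sqrt d}}\le|\zeta(0)|\le\frac{\mathfrak c(8-c^{(t)})}{16\eta\tau^2}$; 2. $|\phi_k(0)|\le\frac{\mathfrak c}{8}|\zeta(0)|$ for all $k\in\mathscr C_s$; 3. $\mathfrak c\le\min\left\{\frac14-\frac{2}{C^{(\phi)}},\frac{nC^{(\phi)}}{4},\left(\frac{n}{48}\right)^{1/3},\frac18\right\}$. Then for all $t\le t_0$ and all $k\in\mathscr C_s$: (a) if $\zeta(0)>0$, then $\left[\zeta(0)^{-1}-(\frac18-\mathfrak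 c)\eta\tau^2t\right]^{-1}\le\zeta(t)\le\left[\zeta(0)^{-1}-(\frac18+\mathfrak c)\eta\tau^2t\right]^{-1}$, while if $\zeta(0)<0$, then $\zeta(0)\le\zeta(t)\le0$; (b) $|\phi_k(t)|\le\frac{C^{(\phi)}\mathfrak c^2}{n}|\zeta(t)|+\frac{\mathfrak c}{8}|\zeta(0)|$.
   Context: Here $\tau,\kappa,\eta,\mathcal L>0$, $d,n$ positive integers with $4\mid n$, $\mathscr C_s\subseteq[n]$ has size $n/4$, and $\mathfrak c=\frac{8\kappa\sqrt d}{\tau}$. In the paper, $\zeta(t)=\zeta^{(s)}(t)=\boldsymbol w_r(t)^\top\boldsymbol\mu^{(s)}$ and $\phi_k(t)=\boldsymbol w_r(t)^\top\boldsymbol\xi_k$ for a fixed neuron of a one-hidden-layer network with cubic activation $\sigma(z)=\frac13z^3$ trained by gradient descent with step size $\eta$ on Gaussian mixture data with cluster-mean norm $\tau$, noise variance $\kappa^2$, dimension $d$; $\mathcal L$ bounds $|\sigma'|$. *)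

theory Defs
  imports Complex_Main
begin

definition frakc :: "real \<Rightarrow> real \<Rightarrow> nat \<Rightarrow> real" where
  "frakc \<tau> \<kappa> d = 8 * \<kappa> * sqrt (real d) / \<tau>"

end

theory Submission
  imports Defs
begin


lemma sum_sq_bounds:
  fixes f :: "nat \<Rightarrow> real"
  assumes "finite A" "\<And>i. i\<in>A \<Longrightarrow> \<bar>f i\<bar> \<le> r" "0 \<le> r" "r \<le> \<bar>z\<bar>"
  shows "real (card A) * (\<bar>z\<bar> - r)^2 \<le> (\<Sum>i\<in>A. (z + f i)^2)"
    and "(\<Sum>i\<in>A. (z + f i)^2) \<le> real (card A) * (\<bar>z\<bar> + r)^2"
proof -
  have l: "(\<bar>z\<bar> - r)^2 \<le> (z + f i)^2" if "i \<in> A" for i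
  proof -
    have "\<bar>f i\<bar> \<le> r" using assms that by auto
    then have "\<bar>z\<bar> - r \<le> \<bar>z + f i\<bar>" by linarith
    then have "(\<bar>z\<bar> - r)^2 \<le> \<bar>z + f i\<bar>^2" using assms(4) by (intro power_mono) auto
    then show ?thesis by simp
  qed
  have u: "(z + f i)^2 \<le> (\<bar>z\<bar> + r)^2" if "i \<in> A" for i
  proof -
    have "\<bar>f i\<bar> \<le> r" using assms that by auto
    then have "\<bar>z + f i\<bar> \<le> \<bar>z\<bar> + r" by linarith
    then have "\<bar>z + f i\<bar>^2 \<le> (\<bar>z\<bar> + r)^2" by (intro power_mono) auto
    then show ?thesis by simp
  qed
  show "real (card A) * (\<bar>z\<bar> - r)^2 \<le> (\<Sum>i\<in>A. (z + f i)^2)"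
    using sum_mono[of A "\<lambda>i. (\<bar>z\<bar> - r)^2" "\<lambda>i. (z + f i)^2"] l by simp
  show "(\<Sum>i\<in>A. (z + f i)^2) \<le> real (card A) * (\<bar>z\<bar> + r)^2"
    using sum_mono[of A "\<lambda>i. (z + f i)^2" "\<lambda>i. (\<bar>z\<bar> + r)^2"] u by simp
qed


lemma pos_step:
  fixes a c z D :: real
  assumes "a>0" "0<c" "c\<le>1/8" "z>0" "a*(1/8 - c/8)*z^2 \<le> D" "D \<le> a*(1/8+c/2)*z^2" "a*z \<le> 2*c"
  shows "inverse z - a*(1/8+c/2) \<le> inverse (z+D)" "inverse (z+D) \<le> inverse z - a*(1/8 - c)"
proof -
  have "a*(1/8 - c/8)*z^2 \<ge> 0" using assms by simp
  then have D0: "D \<ge> 0" using assms by linarith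
  have zD: "z + D > 0" using assms D0 by linarith
  have e: "inverse z - inverse (z+D) = D / (z*(z+D))" using zD assms(4) by (simp add: field_simps)
  have "D / (z*(z+D)) \<le> D / (z*z)" using zD assms(4) D0
    by (intro divide_left_mono mult_left_mono) auto
  also have "\<dots> \<le> a*(1/8+c/2)" using assms(4,6) by (simp add: pos_divide_le_eq power2_eq_square)
  finally show "inverse z - a*(1/8+c/2) \<le> inverse (z+D)" using e by linarith
  have k: "a*(1/8 - c) * (z*(z+D)) \<le> D"
  proof -
    have "a*(1/8-c)*(z*(z+D)) = a*(1/8-c)*z^2 + (1/8-c)*(a*z)*D" by (simp add: algebra_simps power2_eq_square)
    also have "(1/8-c)*(a*z)*D \<le> (1/8)*(2*c)*D"
    proof -
      have "(1/8-c)*(a*z) \<le> (1/8)*(2*c)" using assms by (intro mult_mono[of "1/8-c" "1/8" "a*z" "2*c"]) auto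
      then show ?thesis using D0 by (rule mult_right_mono)
    qed
    finally have "a*(1/8-c)*(z*(z+D)) \<le> a*(1/8-c)*z^2 + c/4*D" by simp
    moreover have "a*(1/8-c)*z^2 + c/4 * D \<le> D"
    proof -
      have q: "(1/8-c) \<le> (1 - c/4) * (1/8 - c/8)" using assms by (simp add: algebra_simps)
      have "a*(1/8-c)*z^2 = (1/8-c) * (a*z^2)" by simp
      also have "\<dots> \<le> ((1 - c/4) * (1/8 - c/8)) * (a*z^2)" using q assms by (intro mult_right_mono) auto
      also have "\<dots> = (1 - c/4) * (a*(1/8 - c/8)*z^2)" by simp
      also have "\<dots> \<le> (1 - c/4) * D" using assms by (intro mult_left_mono) auto
      finally show ?thesis by (simp add: algebra_simps)
    qed
    ultimately show ?thesis by linarith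
  qed
  have "a*(1/8 - c) \<le> D / (z*(z+D))" using k zD assms(4) by (simp add: pos_le_divide_eq)
  then show "inverse (z+D) \<le> inverse z - a*(1/8 - c)" using e by linarith
qed

lemma neg_step:
  fixes a w D :: real
  assumes "a>0" "w>0" "a*w \<le> 1/16" "a*w^2/16 \<le> D" "D \<le> a*w^2/4"
  shows "w - D > 0" "D \<ge> 0" "inverse (w - D) \<le> inverse w + a/3"
proof -
  have "a*w^2/16 \<ge> 0" using assms by simp
  then have D0: "D \<ge> 0" using assms by linarith
  show "D \<ge> 0" by fact
  have "a*w^2/4 = (a*w)*w/4" by (simp add: power2_eq_square)
  also have "\<dots> \<le> (1/16)*w/4" using assms by (intro divide_right_mono mult_right_mono) auto
  finally have "D \<le> w/64" using assms by linarith
  then show wD: "w - D > 0" using assms by linarith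
  have e: "inverse (w - D) - inverse w = D / (w*(w-D))" using wD assms(2) by (simp add: field_simps)
  have "D \<le> a/3 * (w*(w-D))"
  proof -
    have "a/3*(w*(w-D)) = a/3*w^2 - (a*w)/3*D" by (simp add: algebra_simps power2_eq_square)
    moreover have "(a*w)/3*D \<le> (1/48) * D" using assms D0 by (intro mult_right_mono) auto
    ultimately show ?thesis using assms by linarith
  qed
  then have "D / (w*(w-D)) \<le> a/3" using wD assms(2) by (simp add: divide_le_eq)
  then show "inverse (w - D) \<le> inverse w + a/3" using e by linarith
qed

lemma posD:
  fixes a c z nn E S D :: real
  assumes "a>0" "c>0" "c\<le>1/8" "z>0" "nn \<ge> 4" "E \<ge> 0"
    "nn/4*(z - c/4*z)^2 \<le> S" "S \<le> nn/4*(z + c/4*z)^2"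
    "256*nn*E \<le> a*z^2*c^3"
    "a/(2*nn)*S - 3/2*E \<le> D" "D \<le> a/(2*nn)*S + 3/2*E"
  shows "a*(1/8 - c/8)*z^2 \<le> D" "D \<le> a*(1/8+c/2)*z^2"
proof -
  define A where "A = a*z^2"
  define Y1 where "Y1 = A*(1-c/4)^2"
  define Y2 where "Y2 = A*(1+c/4)^2"
  define P where "P = A*c"
  have A0: "A > 0" unfolding A_def using assms by simp
  have P0: "P > 0" unfolding P_def using A0 assms by simp
  have nn0: "nn > 0" using assms by simp
  have "a/(2*nn)*(nn/4*(z - c/4*z)^2) \<le> a/(2*nn)*S" using assms nn0 by (intro mult_left_mono) auto
  moreover have "a/(2*nn)*(nn/4*(z - c/4*z)^2) = Y1/8"
    unfolding Y1_def A_def using nn0 by (simp add: field_simps power2_eq_square)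
  ultimately have S1: "Y1/8 \<le> a/(2*nn)*S" by simp
  have "a/(2*nn)*S \<le> a/(2*nn)*(nn/4*(z + c/4*z)^2)" using assms nn0 by (intro mult_left_mono) auto
  moreover have "a/(2*nn)*(nn/4*(z + c/4*z)^2) = Y2/8"
    unfolding Y2_def A_def using nn0 by (simp add: field_simps power2_eq_square)
  ultimately have S2: "a/(2*nn)*S \<le> Y2/8" by simp
  have "c^2 \<le> (1/8)^2" using assms by (intro power_mono) auto
  then have "c*c^2 \<le> c*(1/8)^2" using assms by (intro mult_left_mono) auto
  then have "A*(c*c^2) \<le> A*(c*(1/8)^2)" by (rule mult_left_mono) (use A0 in auto)
  moreover have "a*z^2*c^3 = A*(c*c^2)" unfolding A_def by (simp add: power2_eq_square power3_eq_cube)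
  moreover have "A*(c*(1/8)^2) = P/64" unfolding P_def by (simp add: power2_eq_square)
  ultimately have "256*nn*E \<le> P/64" using assms by linarith
  moreover have "256*4*E \<le> 256*nn*E" using assms by (intro mult_right_mono) auto
  ultimately have EP: "E \<le> P/65536" by linarith
  have "(1-c/4)^2 \<ge> 1 - c/2" by (simp add: power2_eq_square algebra_simps)
  then have "A*(1-c/2) \<le> A*(1-c/4)^2" using A0 by (intro mult_left_mono) auto
  then have Y1b: "A - P/2 \<le> Y1" unfolding Y1_def P_def by (simp add: algebra_simps)
  have cc: "c*c \<le> c*1" using assms by (intro mult_left_mono) auto
  have ce: "(1+c/4)^2 = 1 + c/2 + c*c/16" by (simp add: power2_eq_square algebra_simps)
  have "(1+c/4)^2 \<le> 1 + 3*c" unfolding ce using cc assms by linarith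
  then have "A*(1+c/4)^2 \<le> A*(1+3*c)" using A0 by (intro mult_left_mono) auto
  then have Y2b: "Y2 \<le> A + 3*P" unfolding Y2_def P_def by (simp add: algebra_simps)
  have g1: "a*(1/8 - c/8)*z^2 = A/8 - P/8" unfolding A_def P_def by (simp add: algebra_simps)
  have g2: "a*(1/8 + c/2)*z^2 = A/8 + P/2" unfolding A_def P_def by (simp add: algebra_simps)
  show "a*(1/8 - c/8)*z^2 \<le> D" unfolding g1 using S1 Y1b EP P0 assms(10) by linarith
  show "D \<le> a*(1/8+c/2)*z^2" unfolding g2 using S2 Y2b EP P0 assms(11) by linarith
qed


lemma negD:
  fixes a c w nn E S D z0 :: real
  assumes "a>0" "c>0" "c\<le>1/8" "w>0" "nn \<ge> 4" "E \<ge> 0"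
    "nn/4*(w - w/8)^2 \<le> S" "S \<le> nn/4*(w + w/8)^2"
    "256*nn*E \<le> a*z0^2*c^3" "z0 \<le> 4*w" "z0 > 0"
    "a/(2*nn)*S - 3/2*E \<le> D" "D \<le> a/(2*nn)*S + 3/2*E"
  shows "a*w^2/16 \<le> D" "D \<le> a*w^2/4"
proof -
  define A where "A = a*w^2"
  have A0: "A > 0" unfolding A_def using assms by simp
  have nn0: "nn > 0" using assms by simp
  have "a/(2*nn)*(nn/4*(w - w/8)^2) \<le> a/(2*nn)*S" using assms nn0 by (intro mult_left_mono) auto
  moreover have "a/(2*nn)*(nn/4*(w - w/8)^2) = 49/512*A"
    unfolding A_def using nn0 by (simp add: field_simps power2_eq_square)
  ultimately have S1: "49/512*A \<le> a/(2*nn)*S" by simp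
  have "a/(2*nn)*S \<le> a/(2*nn)*(nn/4*(w + w/8)^2)" using assms nn0 by (intro mult_left_mono) auto
  moreover have "a/(2*nn)*(nn/4*(w + w/8)^2) = 81/512*A"
    unfolding A_def using nn0 by (simp add: field_simps power2_eq_square)
  ultimately have S2: "a/(2*nn)*S \<le> 81/512*A" by simp
  have "z0^2 \<le> (4*w)^2" using assms by (intro power_mono) auto
  then have "a*z0^2 \<le> a*(4*w)^2" using assms by (intro mult_left_mono) auto
  moreover have "c^3 \<le> (1/8)^3" using assms by (intro power_mono) auto
  ultimately have "a*z0^2*c^3 \<le> a*(4*w)^2*(1/8)^3" using assms
    by (intro mult_mono) auto
  moreover have "a*(4*w)^2*(1/8)^3 = A/32" unfolding A_def by (simp add: power2_eq_square power3_eq_cube)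
  ultimately have "256*nn*E \<le> A/32" using assms by linarith
  moreover have "256*4*E \<le> 256*nn*E" using assms by (intro mult_right_mono) auto
  ultimately have EP: "E \<le> A/32768" by linarith
  show "a*w^2/16 \<le> D" unfolding A_def[symmetric] using S1 EP A0 assms(12) by linarith
  show "D \<le> a*w^2/4" unfolding A_def[symmetric] using S2 EP A0 assms(13) by linarith
qed


lemma Kbound:
  fixes a q X r z g D :: real
  assumes "a>0" "q>0" "0 \<le> X" "X \<le> r*z" "z>0" "r>0" "a*g*z^2 \<le> D" "3*r^2 \<le> 256*g"
  shows "3*(a*q/256)*X^2 \<le> q*D"
proof -
  have "X^2 \<le> (r*z)^2" using assms by (intro power_mono) auto
  then have "3*(a*q/256)*X^2 \<le> 3*(a*q/256)*(r*z)^2" using assms by (intro mult_left_mono) auto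
  also have "\<dots> = (q*(a*z^2))*(3*r^2/256)" by (simp add: algebra_simps power2_eq_square)
  also have "\<dots> \<le> (q*(a*z^2))*g" using assms by (intro mult_left_mono) auto
  also have "\<dots> = q*(a*g*z^2)" by (simp add: algebra_simps)
  also have "\<dots> \<le> q*D" using assms by (intro mult_left_mono) auto
  finally show ?thesis .
qed


lemma phi_step:
  fixes p p' Bt K q D E :: real
  assumes "\<bar>p\<bar> \<le> Bt" "-(5/2)*E \<le> p' - p" "p' - p \<le> K + 5/2*E" "K \<le> q*D" "q*D \<ge> 0" "E \<ge> 0"
  shows "\<bar>p'\<bar> \<le> Bt + q*D + 3*E"
  using assms by linarith


theorem mainTheorem6:
  fixes \<tau> \<kappa> \<eta> L :: real and d n s :: nat
    and C :: "nat \<Rightarrow> nat set"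
    and \<zeta> :: "nat \<Rightarrow> real" and \<phi> :: "nat \<Rightarrow> nat \<Rightarrow> real"
    and ct C\<phi> :: real and t0 :: nat
  defines "c \<equiv> frakc \<tau> \<kappa> d"
  assumes pos: "\<tau> > 0" "\<kappa> > 0" "\<eta> > 0" "L > 0" "d > 0" "n > 0"
    and n4: "4 dvd n"
    and s: "s \<in> {1, 2}"
    and Cs: "C s \<subseteq> {1..n}" "card (C s) = n div 4"
    and upd_zeta: "\<And>t. \<zeta> (Suc t) - \<zeta> t \<in>
        {\<tau>^2 * \<eta> / (2 * real n) * (\<Sum>i\<in>C s. (\<zeta> t + \<phi> i t)^2) - 3/2 * \<eta> * \<tau> * \<kappa> * L ..
         \<tau>^2 * \<eta> / (2 * real n) * (\<Sum>i\<in>C s. (\<zeta> t + \<phi> i t)^2) + 3/2 * \<eta> * \<tau> * \<kappa> * L}"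
    and upd_phi: "\<And>t k. k \<in> C s \<Longrightarrow> \<phi> k (Suc t) - \<phi> k t \<in>
        {\<eta> * (\<kappa>^2 * real d / (4 * real n) * (\<bar>\<phi> k t\<bar> + \<bar>\<zeta> t\<bar>)^2 - 5/2 * \<kappa> * \<tau> * L) ..
         \<eta> * (3 * \<kappa>^2 * real d / (4 * real n) * (\<bar>\<phi> k t\<bar> + \<bar>\<zeta> t\<bar>)^2 + 5/2 * \<kappa> * \<tau> * L)}"
    and ct: "0 < ct" "ct < 8 / (1 + 8 * c)"
    and Cphi: "8 \<le> C\<phi>" "C\<phi> \<le> real n"
    and t0: "real t0 \<le> ct * inverse (\<tau>^2 * \<eta> * \<bar>\<zeta> 0\<bar>)"
    and cond1: "sqrt (32 * L * real n / (c^2 * sqrt (real d))) \<le> \<bar>\<zeta> 0\<bar>"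
               "\<bar>\<zeta> 0\<bar> \<le> c * (8 - ct) / (16 * \<eta> * \<tau>^2)"
    and cond2: "\<And>k. k \<in> C s \<Longrightarrow> \<bar>\<phi> k 0\<bar> \<le> c / 8 * \<bar>\<zeta> 0\<bar>"
    and cond3: "c \<le> Min {1/4 - 2 / C\<phi>, real n * C\<phi> / 4, (real n / 48) powr (1/3), 1/8}"
  shows "\<forall>t \<le> t0. \<forall>k \<in> C s.
           (\<zeta> 0 > 0 \<longrightarrow>
              inverse (inverse (\<zeta> 0) - (1/8 - c) * \<eta> * \<tau>^2 * real t) \<le> \<zeta> t \<and>
              \<zeta> t \<le> inverse (inverse (\<zeta> 0) - (1/8 + c) * \<eta> * \<tau>^2 * real t)) \<and>
           (\<zeta> 0 < 0 \<longrightarrow> \<zeta> 0 \<le> \<zeta> t \<and> \<zeta> t \<le> 0) \<and>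
           \<bar>\<phi> k t\<bar> \<le> C\<phi> * c^2 / real n * \<bar>\<zeta> t\<bar> + c / 8 * \<bar>\<zeta> 0\<bar>"
  proof -
  note tau = pos(1) and kap = pos(2) and eta = pos(3) and Lp = pos(4) and dp = pos(5) and np = pos(6)
  define a where "a = \<tau>^2*\<eta>"
  define E where "E = \<eta>*\<tau>*\<kappa>*L"
  define z0 where "z0 = \<bar>\<zeta> 0\<bar>"
  define nn where "nn = real n"
  define q where "q = c^2/nn"
  define B where "B t = c*z0/8 + q*(\<zeta> t - \<zeta> 0) + 3*real t*E" for t
  define S where "S t = (\<Sum>i\<in>C s. (\<zeta> t + \<phi> i t)^2)" for t
  have a0: "a > 0" unfolding a_def using tau eta by simp
  have E0: "E > 0" unfolding E_def using tau kap eta Lp by simp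
  have cdef: "c = 8*\<kappa>*sqrt(real d)/\<tau>" unfolding c_def frakc_def by simp
  have c0: "c > 0" unfolding cdef using tau kap dp by simp
  have "Min {1/4 - 2 / C\<phi>, real n * C\<phi> / 4, (real n / 48) powr (1/3), 1/8::real} \<le> 1/8"
    by (rule Min_le) auto
  then have c18: "c \<le> 1/8" using cond3 by linarith
  obtain k0 where nk: "n = 4*k0" using n4 by (auto elim: dvdE)
  have k1: "k0 \<ge> 1" using np nk by simp
  have nn4: "nn \<ge> 4" unfolding nn_def nk using k1 by simp
  have nn0: "nn > 0" using nn4 by simp
  have cardC: "real (card (C s)) = nn/4" using Cs(2) unfolding nn_def nk by simp
  have finC: "finite (C s)" using Cs(1) finite_subset by blast
  have cs2: "c^2*sqrt(real d) > 0" using c0 dp by simp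
  have X0: "32*L*real n/(c^2*sqrt(real d)) > 0" using Lp np cs2 by simp
  have "sqrt(32*L*real n/(c^2*sqrt(real d))) > 0" using X0 by simp
  then have z0p: "z0 > 0" using cond1(1) unfolding z0_def by linarith
  have "(sqrt(32*L*real n/(c^2*sqrt(real d))))^2 \<le> z0^2"
    using cond1(1) X0 unfolding z0_def[symmetric] by (intro power_mono) auto
  then have "32*L*real n/(c^2*sqrt(real d)) \<le> z0^2" using X0 by simp
  then have Xz: "32*L*nn \<le> z0^2*(c^2*sqrt(real d))" using cs2 unfolding nn_def by (simp add: pos_divide_le_eq)
  have ctau: "c*\<tau> = 8*\<kappa>*sqrt(real d)" unfolding cdef using tau by simp
  have Ebd: "256*nn*E \<le> a*z0^2*c^3"
  proof -
    have "256*nn*E = (8*\<eta>*\<tau>*\<kappa>)*(32*L*nn)" by (simp add: E_def algebra_simps)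
    also have "\<dots> \<le> (8*\<eta>*\<tau>*\<kappa>)*(z0^2*(c^2*sqrt(real d)))"
      using Xz tau kap eta by (intro mult_left_mono) auto
    also have "\<dots> = \<eta>*\<tau>*z0^2*c^2*(8*\<kappa>*sqrt(real d))" by (simp add: algebra_simps)
    also have "\<dots> = \<eta>*\<tau>*z0^2*c^2*(c*\<tau>)" using ctau by simp
    also have "\<dots> = a*z0^2*c^3" by (simp add: a_def algebra_simps power2_eq_square power3_eq_cube)
    finally show ?thesis .
  qed
  have c2: "c^2 = 64*\<kappa>^2*real d/\<tau>^2" unfolding cdef by (simp add: power_divide power_mult_distrib)
  have kd: "\<eta>*(\<kappa>^2*real d/(4*real n)) = a*q/256"
    unfolding q_def a_def c2 nn_def using tau np by (simp add: field_simps)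
  have tb: "a*z0*real t \<le> ct" if "t \<le> t0" for t
  proof -
    have "\<tau>^2*\<eta>*\<bar>\<zeta> 0\<bar> = a*z0" by (simp add: a_def z0_def)
    then have "real t0 \<le> ct/(a*z0)" using t0 by (simp add: divide_inverse)
    moreover have "real t \<le> real t0" using that by simp
    ultimately have "real t \<le> ct/(a*z0)" by linarith
    then have "real t * (a*z0) \<le> ct" using a0 z0p by (simp add: pos_le_divide_eq)
    then show ?thesis by (simp add: algebra_simps)
  qed
  have az0: "a*z0 \<le> c*(8-ct)/16"
  proof -
    have "z0*(16*\<eta>*\<tau>^2) \<le> c*(8-ct)" using cond1(2) tau eta unfolding z0_def[symmetric]
      by (simp add: pos_le_divide_eq)
    then show ?thesis by (simp add: a_def algebra_simps)
  qed
  have ctc: "ct*(1+8*c) < 8" using ct(2) c0 by (simp add: pos_less_divide_eq)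
  have cct: "c*ct > 0" using c0 ct(1) by simp
  have ctc': "ct + 8*(c*ct) < 8" using ctc by (simp add: algebra_simps)
  have ct8: "ct < 8" using ctc' cct by linarith
  have q0: "q > 0" unfolding q_def using c0 nn0 by simp
  have qc: "q \<le> c/32"
  proof -
    have "q \<le> c^2/4" unfolding q_def using nn4 c0 by (intro divide_left_mono) auto
    also have "c^2/4 = (c*c)/4" by (simp add: power2_eq_square)
    also have "\<dots> \<le> (c*(1/8))/4" using c0 c18 by (intro divide_right_mono mult_left_mono) auto
    also have "\<dots> = c/32" by simp
    finally show ?thesis .
  qed
  have qnn: "q*nn = c^2" unfolding q_def using nn0 by simp
  have del: "3*real t*E \<le> q*z0/80" if "t \<le> t0" for t
  proof -
    have "256*nn*(3*real t*E) = 3*real t*(256*nn*E)" by (simp add: algebra_simps)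
    also have "\<dots> \<le> 3*real t*(a*z0^2*c^3)" using Ebd by (intro mult_left_mono) auto
    also have "\<dots> = 3*(a*z0*real t)*(z0*c^3)" by (simp add: algebra_simps power2_eq_square)
    also have "\<dots> \<le> 3*ct*(z0*c^3)" using tb[OF that] z0p c0 by (intro mult_left_mono mult_right_mono) auto
    also have "\<dots> \<le> 3*8*(z0*c^3)" using ct8 z0p c0 by (intro mult_left_mono mult_right_mono) auto
    also have "z0*c^3 = (z0*c^2)*c" by (simp add: power2_eq_square power3_eq_cube)
    also have "3*8*((z0*c^2)*c) \<le> 3*8*((z0*c^2)*(1/8))" using c18 z0p by (intro mult_left_mono) auto
    also have "\<dots> = 3*(z0*c^2)" by simp
    also have "\<dots> \<le> 256*nn*(q*z0/80)" unfolding qnn[symmetric] using z0p q0 nn0 by (simp add: algebra_simps)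
    finally show ?thesis using nn0 by (simp add: ac_simps)
  qed
  have eS: "\<tau>^2 * \<eta> / (2 * real n) = a/(2*nn)" by (simp add: a_def nn_def)
  have eE: "3/2 * \<eta> * \<tau> * \<kappa> * L = 3/2*E" by (simp add: E_def)
  have upz: "a/(2*nn)*S t - 3/2*E \<le> \<zeta> (Suc t) - \<zeta> t \<and> \<zeta> (Suc t) - \<zeta> t \<le> a/(2*nn)*S t + 3/2*E" for t
    using upd_zeta[of t] unfolding eS eE atLeastAtMost_iff S_def by simp
  have ephl: "\<eta> * (\<kappa>^2 * real d / (4 * real n) * X - 5/2 * \<kappa> * \<tau> * L) = a*q/256*X - 5/2*E" for X
  proof -
    have "\<eta> * (\<kappa>^2 * real d / (4 * real n) * X - 5/2 * \<kappa> * \<tau> * L)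
        = (\<eta>*(\<kappa>^2*real d/(4*real n)))*X - 5/2*(\<eta>*\<tau>*\<kappa>*L)" by (simp add: algebra_simps)
    then show ?thesis unfolding kd E_def by simp
  qed
  have ephu: "\<eta> * (3 * \<kappa>^2 * real d / (4 * real n) * X + 5/2 * \<kappa> * \<tau> * L) = 3*(a*q/256)*X + 5/2*E" for X
  proof -
    have "\<eta> * (3 * \<kappa>^2 * real d / (4 * real n) * X + 5/2 * \<kappa> * \<tau> * L)
        = 3*(\<eta>*(\<kappa>^2*real d/(4*real n)))*X + 5/2*(\<eta>*\<tau>*\<kappa>*L)" by (simp add: algebra_simps)
    then show ?thesis unfolding kd E_def by simp
  qed
  have upph: "a*q/256*(\<bar>\<phi> k t\<bar> + \<bar>\<zeta> t\<bar>)^2 - 5/2*E \<le> \<phi> k (Suc t) - \<phi> k t \<and>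
      \<phi> k (Suc t) - \<phi> k t \<le> 3*(a*q/256)*(\<bar>\<phi> k t\<bar> + \<bar>\<zeta> t\<bar>)^2 + 5/2*E" if "k \<in> C s" for k t
    using upd_phi[OF that, of t] unfolding ephl ephu atLeastAtMost_iff by simp
  define PhiOK where "PhiOK t \<longleftrightarrow> (\<forall>k\<in>C s. \<bar>\<phi> k t\<bar> \<le> B t)" for t
  define PosOK where "PosOK t \<longleftrightarrow> (0 < \<zeta> t \<and> inverse (\<zeta> t) \<le> inverse (\<zeta> 0) - (1/8 - c)*a*real t
      \<and> inverse (\<zeta> 0) - (1/8 + c/2)*a*real t \<le> inverse (\<zeta> t))" for t
  define NegOK where "NegOK t \<longleftrightarrow> (\<zeta> 0 \<le> \<zeta> t \<and> \<zeta> t < 0 \<and> inverse (- \<zeta> t) \<le> inverse z0 + a*real t/3)" for t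
  have posfacts: "z0 \<le> \<zeta> t \<and> a*\<zeta> t \<le> 2*c \<and> B t \<le> c/4*\<zeta> t"
    if tt: "t \<le> t0" and zp: "\<zeta> 0 > 0" and P: "PosOK t" for t
  proof -
    have z0e: "z0 = \<zeta> 0" unfolding z0_def using zp by simp
    have zt: "\<zeta> t > 0" and i1: "inverse (\<zeta> t) \<le> inverse (\<zeta> 0) - (1/8 - c)*a*real t"
      and i2: "inverse (\<zeta> 0) - (1/8 + c/2)*a*real t \<le> inverse (\<zeta> t)" using P unfolding PosOK_def by auto
    have "(1/8 - c)*a*real t \<ge> 0" using c18 a0 by simp
    then have "inverse (\<zeta> t) \<le> inverse (\<zeta> 0)" using i1 by linarith
    then have z0le: "z0 \<le> \<zeta> t" unfolding z0e using zt zp by simp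
    define u where "u = a*z0*real t"
    have u0: "u \<ge> 0" unfolding u_def using a0 z0p by simp
    have uct: "u \<le> ct" unfolding u_def using tb[OF tt] .
    define Den where "Den = inverse (\<zeta> 0) - (1/8 + c/2)*a*real t"
    have zD: "z0*Den = 1 - (1/8 + c/2)*u" unfolding Den_def u_def z0e using zp
      by (simp add: algebra_simps)
    have "(1/8 + c/2)*u \<le> (1/8 + c/2)*ct" using uct c0 by (intro mult_left_mono) auto
    also have "(1/8 + c/2)*ct = ct/8 + (c*ct)/2" by (simp add: algebra_simps)
    finally have "(1/8 + c/2)*u < 1" using ctc' cct by linarith
    then have "z0*Den > 0" unfolding zD by linarith
    then have Den0: "Den > 0" using z0p by (simp add: zero_less_mult_iff)
    have "\<zeta> t \<le> inverse Den"
    proof -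
      have "inverse (inverse (\<zeta> t)) \<le> inverse Den" using i2 Den0 unfolding Den_def[symmetric]
        by (intro le_imp_inverse_le) auto
      then show ?thesis by simp
    qed
    then have "a*\<zeta> t \<le> a*inverse Den" using a0 by (intro mult_left_mono) auto
    moreover have "a*inverse Den \<le> 2*c"
    proof -
      have br: "(8-ct)/16 - 2 + (1/4 + c)*ct \<le> 0"
      proof -
        have "(8-ct)/16 - 2 + (1/4 + c)*ct = 3*ct/16 - 3/2 + c*ct" by (simp add: field_simps)
        moreover have "3*ct/16 - 3/2 + c*ct \<le> 0" using ctc' cct by linarith
        ultimately show ?thesis by simp
      qed
      have "c*((8-ct)/16 - 2 + (1/4 + c)*ct) \<le> 0" using br c0 by (simp add: mult_nonneg_nonpos)
      then have "c*(8-ct)/16 \<le> 2*c*(1 - (1/8 + c/2)*ct)" by (simp add: algebra_simps)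
      also have "\<dots> \<le> 2*c*(1 - (1/8 + c/2)*u)" using uct c0 by (intro mult_left_mono) (auto intro: mult_left_mono)
      finally have "a*z0 \<le> 2*c*(z0*Den)" using az0 zD by simp
      then have "z0*a \<le> z0*(2*c*Den)" by (simp add: algebra_simps)
      then have "a \<le> 2*c*Den" using z0p by simp
      then show ?thesis using Den0 by (simp add: divide_inverse[symmetric] pos_divide_le_eq)
    qed
    ultimately have aZ: "a*\<zeta> t \<le> 2*c" by linarith
    have "B t \<le> c/4*\<zeta> t"
    proof -
      have Bt: "B t = c*z0/8 + q*\<zeta> t - q*z0 + 3*real t*E" unfolding B_def z0e by (simp add: algebra_simps)
      have "c*z0 \<le> c*\<zeta> t" using z0le c0 by (intro mult_left_mono) auto
      moreover have "q*\<zeta> t \<le> c/32*\<zeta> t" using qc zt by (intro mult_right_mono) auto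
      moreover have "q*z0 > 0" using q0 z0p by simp
      moreover have "c*\<zeta> t > 0" using c0 zt by simp
      ultimately show ?thesis unfolding Bt using del[OF tt] by linarith
    qed
    then show ?thesis using z0le aZ by simp
  qed
  have negfacts: "z0 \<le> 4*(-\<zeta> t) \<and> -\<zeta> t \<le> z0 \<and> a*(-\<zeta> t) \<le> 1/16 \<and> B t \<le> (-\<zeta> t)/8"
    if tt: "t \<le> t0" and zn: "\<zeta> 0 < 0" and N: "NegOK t" for t
  proof -
    define w where "w = - \<zeta> t"
    have z0e: "z0 = - \<zeta> 0" unfolding z0_def using zn by simp
    have w1: "\<zeta> 0 \<le> \<zeta> t" and w0: "w > 0" and wi: "inverse w \<le> inverse z0 + a*real t/3"
      using N unfolding NegOK_def w_def by auto
    have wz: "w \<le> z0" using w1 unfolding w_def z0e by simp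
    have "z0*inverse w \<le> z0*(inverse z0 + a*real t/3)" using wi z0p by (intro mult_left_mono) auto
    also have "\<dots> = 1 + (a*z0*real t)/3" using z0p by (simp add: algebra_simps)
    also have "\<dots> < 4" using tb[OF tt] ct8 by linarith
    finally have "z0/w < 4" by (simp add: divide_inverse)
    then have z4: "z0 \<le> 4*w" using w0 by (simp add: divide_less_eq)
    have "a*w \<le> a*z0" using wz a0 by (intro mult_left_mono) auto
    moreover have "c*(8-ct) \<le> (1/8)*8" using c0 c18 ct ct8 by (intro mult_mono) auto
    ultimately have aw: "a*w \<le> 1/16" using az0 by linarith
    have "B t \<le> w/8"
    proof -
      have Bt: "B t = c*z0/8 + q*z0 - q*w + 3*real t*E" unfolding B_def z0e w_def by (simp add: algebra_simps)
      have "q*w > 0" using q0 w0 by simp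
      moreover have "q*z0 \<le> c/32*z0" using qc z0p by (intro mult_right_mono) auto
      moreover have "c*z0 \<le> c*(4*w)" using z4 c0 by (intro mult_left_mono) auto
      moreover have "c*w \<le> (1/8)*w" using c18 w0 by (intro mult_right_mono) auto
      moreover have "c*z0 > 0" using c0 z0p by simp
      ultimately show ?thesis unfolding Bt using del[OF tt] by linarith
    qed
    then show ?thesis using z4 wz aw unfolding w_def by simp
  qed
  have inv: "PhiOK t \<and> (\<zeta> 0 > 0 \<longrightarrow> PosOK t) \<and> (\<zeta> 0 < 0 \<longrightarrow> NegOK t)" if "t \<le> t0" for t
    using that
  proof (induction t)
    case 0
    have "PhiOK 0" unfolding PhiOK_def B_def z0_def using cond2 by (simp add: mult.commute)
    moreover have "\<zeta> 0 > 0 \<longrightarrow> PosOK 0" unfolding PosOK_def by simp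
    moreover have "\<zeta> 0 < 0 \<longrightarrow> NegOK 0" unfolding NegOK_def z0_def by simp
    ultimately show ?case by simp
  next
    case (Suc t)
    have tt: "t \<le> t0" using Suc.prems by simp
    have IH: "PhiOK t" "\<zeta> 0 > 0 \<longrightarrow> PosOK t" "\<zeta> 0 < 0 \<longrightarrow> NegOK t" using Suc.IH[OF tt] by auto
    define D where "D = \<zeta> (Suc t) - \<zeta> t"
    have Dl: "a/(2*nn)*S t - 3/2*E \<le> D" and Du: "D \<le> a/(2*nn)*S t + 3/2*E"
      using upz[of t] unfolding D_def by auto
    have phis: "\<bar>\<phi> k t\<bar> \<le> B t" if "k \<in> C s" for k using IH(1) that unfolding PhiOK_def by auto
    have BS: "B (Suc t) = B t + q*D + 3*E" unfolding B_def D_def by (simp add: algebra_simps)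
    have phistep: "PhiOK (Suc t)" if Kb: "\<And>k. k \<in> C s \<Longrightarrow> 3*(a*q/256)*(\<bar>\<phi> k t\<bar> + \<bar>\<zeta> t\<bar>)^2 \<le> q*D"
      and qD: "q*D \<ge> 0"
    proof -
      have "\<bar>\<phi> k (Suc t)\<bar> \<le> B (Suc t)" if k: "k \<in> C s" for k
      proof -
        have "a*q/256*(\<bar>\<phi> k t\<bar> + \<bar>\<zeta> t\<bar>)^2 \<ge> 0" using a0 q0 by simp
        then have "-(5/2)*E \<le> \<phi> k (Suc t) - \<phi> k t" using upph[OF k, of t] by linarith
        then show ?thesis unfolding BS
          using phi_step[OF phis[OF k] _ _ Kb[OF k] qD] upph[OF k, of t] E0 by auto
      qed
      then show ?thesis unfolding PhiOK_def by auto
    qed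
    show ?case
    proof (cases "\<zeta> 0 > 0")
      case True
      have PO: "PosOK t" using IH(2) True by simp
      have pf: "z0 \<le> \<zeta> t" "a*\<zeta> t \<le> 2*c" "B t \<le> c/4*\<zeta> t" using posfacts[OF tt True PO] by auto
      have zt: "\<zeta> t > 0" using pf(1) z0p by linarith
      define r where "r = c/4*\<zeta> t"
      have r0: "0 \<le> r" unfolding r_def using c0 zt by simp
      have rz: "r \<le> \<bar>\<zeta> t\<bar>" unfolding r_def using c18 zt by simp
      have fr: "\<And>i. i \<in> C s \<Longrightarrow> \<bar>\<phi> i t\<bar> \<le> r" using phis pf(3) unfolding r_def by fastforce
      have Sl: "nn/4*(\<zeta> t - c/4*\<zeta> t)^2 \<le> S t"
        using sum_sq_bounds(1)[where A="C s" and f="\<lambda>i. \<phi> i t" and r=r and z="\<zeta> t", OF finC fr r0 rz]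
        unfolding cardC S_def r_def using zt by simp
      have Su: "S t \<le> nn/4*(\<zeta> t + c/4*\<zeta> t)^2"
        using sum_sq_bounds(2)[where A="C s" and f="\<lambda>i. \<phi> i t" and r=r and z="\<zeta> t", OF finC fr r0 rz]
        unfolding cardC S_def r_def using zt by simp
      have "z0^2 \<le> (\<zeta> t)^2" using pf(1) z0p by (intro power_mono) auto
      then have "a*z0^2*c^3 \<le> a*(\<zeta> t)^2*c^3" using a0 c0 by (intro mult_right_mono mult_left_mono) auto
      then have Ebd': "256*nn*E \<le> a*(\<zeta> t)^2*c^3" using Ebd by linarith
      have DD: "a*(1/8 - c/8)*(\<zeta> t)^2 \<le> D" "D \<le> a*(1/8+c/2)*(\<zeta> t)^2"
        using posD[OF a0 c0 c18 zt nn4 _ Sl Su Ebd' Dl Du] E0 by auto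
      have PS: "inverse (\<zeta> t) - a*(1/8+c/2) \<le> inverse (\<zeta> t + D)" "inverse (\<zeta> t + D) \<le> inverse (\<zeta> t) - a*(1/8 - c)"
        using pos_step[OF a0 c0 c18 zt DD pf(2)] by auto
      have zS: "\<zeta> t + D = \<zeta> (Suc t)" unfolding D_def by simp
      have "0 \<le> a*(1/8 - c/8)*(\<zeta> t)^2" using a0 c18 by (intro mult_nonneg_nonneg) auto
      then have D0: "D \<ge> 0" using DD(1) by linarith
      have i1: "inverse (\<zeta> t) \<le> inverse (\<zeta> 0) - (1/8 - c)*a*real t"
        and i2: "inverse (\<zeta> 0) - (1/8 + c/2)*a*real t \<le> inverse (\<zeta> t)" using PO unfolding PosOK_def by auto
      have "inverse (\<zeta> (Suc t)) \<le> inverse (\<zeta> 0) - (1/8 - c)*a*real t - a*(1/8 - c)"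
        using PS(2) i1 unfolding zS by linarith
      also have "\<dots> = inverse (\<zeta> 0) - (1/8 - c)*a*real (Suc t)" by (simp add: field_simps)
      finally have j1: "inverse (\<zeta> (Suc t)) \<le> inverse (\<zeta> 0) - (1/8 - c)*a*real (Suc t)" .
      have "inverse (\<zeta> 0) - (1/8 + c/2)*a*real (Suc t) = inverse (\<zeta> 0) - (1/8 + c/2)*a*real t - a*(1/8+c/2)"
        by (simp add: field_simps)
      also have "\<dots> \<le> inverse (\<zeta> (Suc t))" using PS(1) i2 unfolding zS by linarith
      finally have j2: "inverse (\<zeta> 0) - (1/8 + c/2)*a*real (Suc t) \<le> inverse (\<zeta> (Suc t))" .
      have "PosOK (Suc t)" unfolding PosOK_def using j1 j2 zS zt D0 by auto
      moreover have "PhiOK (Suc t)"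
      proof (rule phistep)
        show "q*D \<ge> 0" using q0 D0 by simp
        fix k assume k: "k \<in> C s"
        have X0: "0 \<le> \<bar>\<phi> k t\<bar> + \<bar>\<zeta> t\<bar>" by simp
        have "\<bar>\<phi> k t\<bar> + \<bar>\<zeta> t\<bar> \<le> (1 + c/4)*\<zeta> t" using fr[OF k] zt unfolding r_def by (simp add: algebra_simps)
        also have "\<dots> \<le> (33/32)*\<zeta> t" using c18 zt by (intro mult_right_mono) auto
        finally have Xr: "\<bar>\<phi> k t\<bar> + \<bar>\<zeta> t\<bar> \<le> (33/32)*\<zeta> t" .
        have g: "3*(33/32)^2 \<le> 256*(1/8 - c/8::real)" using c18 by (simp add: power2_eq_square)
        show "3*(a*q/256)*(\<bar>\<phi> k t\<bar> + \<bar>\<zeta> t\<bar>)^2 \<le> q*D"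
          by (rule Kbound[OF a0 q0 X0 Xr zt _ DD(1) g]) simp
      qed
      ultimately show ?thesis using True by simp
    next
      case False
      then have zn: "\<zeta> 0 < 0" using z0p unfolding z0_def by auto
      have NO: "NegOK t" using IH(3) zn by simp
      have nf: "z0 \<le> 4*(-\<zeta> t)" "-\<zeta> t \<le> z0" "a*(-\<zeta> t) \<le> 1/16" "B t \<le> (-\<zeta> t)/8"
        using negfacts[OF tt zn NO] by auto
      define w where "w = - \<zeta> t"
      have w0: "w > 0" using NO unfolding NegOK_def w_def by simp
      have aw: "\<bar>\<zeta> t\<bar> = w" unfolding w_def using w0 unfolding w_def by simp
      define r where "r = w/8"
      have r0: "0 \<le> r" unfolding r_def using w0 by simp
      have rz: "r \<le> \<bar>\<zeta> t\<bar>" unfolding r_def aw using w0 by simp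
      have fr: "\<And>i. i \<in> C s \<Longrightarrow> \<bar>\<phi> i t\<bar> \<le> r" using phis nf(4) unfolding r_def w_def by fastforce
      have Sl: "nn/4*(w - w/8)^2 \<le> S t"
        using sum_sq_bounds(1)[where A="C s" and f="\<lambda>i. \<phi> i t" and r=r and z="\<zeta> t", OF finC fr r0 rz]
        unfolding cardC S_def r_def aw by simp
      have Su: "S t \<le> nn/4*(w + w/8)^2"
        using sum_sq_bounds(2)[where A="C s" and f="\<lambda>i. \<phi> i t" and r=r and z="\<zeta> t", OF finC fr r0 rz]
        unfolding cardC S_def r_def aw by simp
      have z4: "z0 \<le> 4*w" using nf(1) unfolding w_def .
      have DD: "a*w^2/16 \<le> D" "D \<le> a*w^2/4"
        using negD[OF a0 c0 c18 w0 nn4 _ Sl Su Ebd z4 z0p Dl Du] E0 by auto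
      have awl: "a*w \<le> 1/16" using nf(3) unfolding w_def .
      have NS: "w - D > 0" "D \<ge> 0" "inverse (w - D) \<le> inverse w + a/3"
        using neg_step[OF a0 w0 awl DD] by auto
      have wS: "w - D = - \<zeta> (Suc t)" unfolding w_def D_def by simp
      have n1: "\<zeta> 0 \<le> \<zeta> t" and n3: "inverse w \<le> inverse z0 + a*real t/3"
        using NO unfolding NegOK_def w_def by auto
      have "inverse (- \<zeta> (Suc t)) \<le> inverse z0 + a*real t/3 + a/3" using NS(3) n3 unfolding wS by linarith
      also have "\<dots> = inverse z0 + a*real (Suc t)/3" by (simp add: field_simps)
      finally have j: "inverse (- \<zeta> (Suc t)) \<le> inverse z0 + a*real (Suc t)/3" .
      have "NegOK (Suc t)" unfolding NegOK_def using j n1 NS(1,2) wS unfolding D_def by auto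
      moreover have "PhiOK (Suc t)"
      proof (rule phistep)
        show "q*D \<ge> 0" using q0 NS(2) by simp
        fix k assume k: "k \<in> C s"
        have X0: "0 \<le> \<bar>\<phi> k t\<bar> + \<bar>\<zeta> t\<bar>" by simp
        have Xr: "\<bar>\<phi> k t\<bar> + \<bar>\<zeta> t\<bar> \<le> (9/8)*w" using fr[OF k] unfolding r_def aw by simp
        have g: "3*(9/8)^2 \<le> 256*(1/16::real)" by (simp add: power2_eq_square)
        have DD': "a*(1/16)*w^2 \<le> D" using DD(1) by simp
        show "3*(a*q/256)*(\<bar>\<phi> k t\<bar> + \<bar>\<zeta> t\<bar>)^2 \<le> q*D"
          by (rule Kbound[OF a0 q0 X0 Xr w0 _ DD' g]) simp
      qed
      ultimately show ?thesis using zn by simp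
    qed
  qed
  show ?thesis
  proof (intro allI impI ballI)
    fix t k assume tt: "t \<le> t0" and k: "k \<in> C s"
    have I: "PhiOK t" "\<zeta> 0 > 0 \<longrightarrow> PosOK t" "\<zeta> 0 < 0 \<longrightarrow> NegOK t" using inv[OF tt] by auto
    have ph: "\<bar>\<phi> k t\<bar> \<le> B t" using I(1) k unfolding PhiOK_def by auto
    have Cq: "C\<phi> * c^2 / real n = C\<phi>*q" unfolding q_def nn_def by simp
    have cz: "c / 8 * \<bar>\<zeta> 0\<bar> = c*z0/8" unfolding z0_def by simp
    have ea: "\<And>x. x * \<eta> * \<tau>^2 * real t = x*a*real t" unfolding a_def by (simp add: algebra_simps)
    have A: "\<zeta> 0 > 0 \<longrightarrow>
              inverse (inverse (\<zeta> 0) - (1/8 - c) * \<eta> * \<tau>^2 * real t) \<le> \<zeta> t \<and>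
              \<zeta> t \<le> inverse (inverse (\<zeta> 0) - (1/8 + c) * \<eta> * \<tau>^2 * real t)"
    proof
      assume zp: "\<zeta> 0 > 0"
      have PO: "PosOK t" using I(2) zp by simp
      have zt: "\<zeta> t > 0" and i1: "inverse (\<zeta> t) \<le> inverse (\<zeta> 0) - (1/8 - c)*a*real t"
        and i2: "inverse (\<zeta> 0) - (1/8 + c/2)*a*real t \<le> inverse (\<zeta> t)" using PO unfolding PosOK_def by auto
      have "inverse (inverse (\<zeta> 0) - (1/8 - c)*a*real t) \<le> inverse (inverse (\<zeta> t))"
        using i1 zt by (intro le_imp_inverse_le) auto
      then have l1: "inverse (inverse (\<zeta> 0) - (1/8 - c)*a*real t) \<le> \<zeta> t" by simp
      have z0e: "z0 = \<zeta> 0" unfolding z0_def using zp by simp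
      have "(1/8 + c)*(a*z0*real t) \<le> (1/8 + c)*ct" using tb[OF tt] c0 by (intro mult_left_mono) auto
      also have "(1/8 + c)*ct = (ct + 8*(c*ct))/8" by (simp add: algebra_simps)
      also have "\<dots> < 1" using ctc' by simp
      finally have lt1: "(1/8 + c)*(a*z0*real t) < 1" .
      have "z0*(inverse (\<zeta> 0) - (1/8 + c)*a*real t) = 1 - (1/8 + c)*(a*z0*real t)"
        unfolding z0e using zp by (simp add: algebra_simps)
      then have "z0*(inverse (\<zeta> 0) - (1/8 + c)*a*real t) > 0" using lt1 by (metis diff_gt_0_iff_gt)
      then have dp0: "inverse (\<zeta> 0) - (1/8 + c)*a*real t > 0" using z0p by (simp add: zero_less_mult_iff)
      have "(1/8 + c/2)*a*real t \<le> (1/8 + c)*a*real t" using c0 a0 by (intro mult_right_mono) auto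
      then have "inverse (\<zeta> 0) - (1/8 + c)*a*real t \<le> inverse (\<zeta> t)" using i2 by linarith
      then have "inverse (inverse (\<zeta> t)) \<le> inverse (inverse (\<zeta> 0) - (1/8 + c)*a*real t)"
        using dp0 by (intro le_imp_inverse_le) auto
      then have l2: "\<zeta> t \<le> inverse (inverse (\<zeta> 0) - (1/8 + c)*a*real t)" by simp
      show "inverse (inverse (\<zeta> 0) - (1/8 - c) * \<eta> * \<tau>^2 * real t) \<le> \<zeta> t \<and>
              \<zeta> t \<le> inverse (inverse (\<zeta> 0) - (1/8 + c) * \<eta> * \<tau>^2 * real t)"
        unfolding ea using l1 l2 by simp
    qed
    have Bn: "\<zeta> 0 < 0 \<longrightarrow> \<zeta> 0 \<le> \<zeta> t \<and> \<zeta> t \<le> 0" using I(3) unfolding NegOK_def by auto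
    have Cb: "\<bar>\<phi> k t\<bar> \<le> C\<phi> * c^2 / real n * \<bar>\<zeta> t\<bar> + c / 8 * \<bar>\<zeta> 0\<bar>"
    proof (cases "\<zeta> 0 > 0")
      case True
      have PO: "PosOK t" using I(2) True by simp
      have pf: "z0 \<le> \<zeta> t" using posfacts[OF tt True PO] by auto
      have Bt: "B t = c*z0/8 + q*\<zeta> t - q*z0 + 3*real t*E" unfolding B_def z0_def using True by (simp add: algebra_simps)
      have m1: "q*\<zeta> t \<le> C\<phi>*q*\<zeta> t" using Cphi q0 pf z0p by (intro mult_right_mono) auto
      have m2: "q*z0 > 0" using q0 z0p by simp
      have ab: "\<bar>\<zeta> t\<bar> = \<zeta> t" using pf z0p by simp
      show ?thesis unfolding Cq cz ab using ph Bt del[OF tt] m1 m2 by linarith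
    next
      case False
      then have zn: "\<zeta> 0 < 0" using z0p unfolding z0_def by auto
      have NO: "NegOK t" using I(3) zn by simp
      have nf: "z0 \<le> 4*(-\<zeta> t)" using negfacts[OF tt zn NO] by auto
      have ztn: "\<zeta> t < 0" using NO unfolding NegOK_def by simp
      define w where "w = - \<zeta> t"
      have Bt: "B t = c*z0/8 + q*z0 - q*w + 3*real t*E" unfolding B_def z0_def w_def using zn by (simp add: algebra_simps)
      have "q*z0 \<le> q*(4*w)" using nf q0 unfolding w_def by (intro mult_left_mono) auto
      then have m1: "q*z0 \<le> 4*(q*w)" by simp
      have w0: "w > 0" unfolding w_def using ztn by simp
      have "(8*q)*w \<le> (C\<phi>*q)*w" using Cphi q0 w0 by (intro mult_right_mono) auto
      then have m2: "8*(q*w) \<le> C\<phi>*q*w" by (simp add: mult.assoc)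
      have m3: "q*w > 0" using q0 w0 by simp
      have ab: "\<bar>\<zeta> t\<bar> = w" using ztn unfolding w_def by simp
      show ?thesis unfolding Cq cz ab using ph Bt del[OF tt] m1 m2 m3 by linarith
    qed
    show "(\<zeta> 0 > 0 \<longrightarrow>
              inverse (inverse (\<zeta> 0) - (1/8 - c) * \<eta> * \<tau>^2 * real t) \<le> \<zeta> t \<and>
              \<zeta> t \<le> inverse (inverse (\<zeta> 0) - (1/8 + c) * \<eta> * \<tau>^2 * real t)) \<and>
           (\<zeta> 0 < 0 \<longrightarrow> \<zeta> 0 \<le> \<zeta> t \<and> \<zeta> t \<le> 0) \<and>
           \<bar>\<phi> k t\<bar> \<le> C\<phi> * c^2 / real n * \<bar>\<zeta> t\<bar> + c / 8 * \<bar>\<zeta> 0\<bar>"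
      using A Bn Cb by blast
  qed
qed

end
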